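(* Let $f_1,f_2,f_3$ be functions on an open interval $I$ and let $X_{\mathbb{F}}=\begin{pmatrix}0&f_1&0&0\\-f_1&0&f_2&0\\0&-f_2&0&f_3\\0&0&-f_3&0\end{pmatrix}$. Let $\gamma: I\to\mathbb{E}^4$ be a $2$-regular curve which admits a frame $\mathbb{F}$ with coefficient matrix $X_{\mathbb{F}}$. Then $\gamma$ admits a frame $\mathbb{D}$ with coefficient matrix $X_{\mathbb{D}}=\begin{pmatrix}0&d_1&0&0\\-d_1&0&d_2&d_3\\0&-d_2&0&0\\0&-d_3&0&0\end{pmatrix}$, where $d_1=\epsilon f_1$, $d_2=\epsilon f_2\cos\left(\int f_3\,ds\right)$, $d_3=-\kappa f_2\sin\left(\int f_3\,ds\right)$ for some $\epsilon,\kappa\in\{1,-1\}$ (here $\int f_3\,ds$ denotes an antiderivative of $f_3$).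
   Context: A regular curve $\gamma: I\to\mathbb{E}^4$ is considered with arc-length parameter $s$; $\mathbb{T}=\gamma'$ is its unit tangent vector, and $\gamma$ is $2$-regular if $\mathbb{T}'$ is nowhere vanishing. A frame on $\gamma$ is an ordered orthonormal frame $(\mathbb{T},\mathbb{Z}_1,\mathbb{Z}_2,\mathbb{Z}_3)$ of smooth vector fields along $\gamma$ whose first vector is $\mathbb{T}$; it is identified with the smooth map $\mathbb{Z}: I\to O(4)$ whose rows are these vectors. Its coefficient matrix is the $\mathfrak{o}(4)$-valued function $X$ with $\mathbb{Z}'=X\mathbb{Z}$. *)

theory Defs
  imports "HOL-Analysis.Analysis"
begin

definition smooth_on :: "real set \<Rightarrow> (real \<Rightarrow> 'a::real_normed_vector) \<Rightarrow> bool" where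
  "smooth_on I g \<longleftrightarrow> (\<exists>D :: nat \<Rightarrow> real \<Rightarrow> 'a.
      (\<forall>s\<in>I. D 0 s = g s) \<and>
      (\<forall>n. \<forall>s\<in>I. (D n has_vector_derivative D (Suc n) s) (at s)))"

definition open_interval :: "real set \<Rightarrow> bool" where
  "open_interval I \<longleftrightarrow> open I \<and> is_interval I \<and> I \<noteq> {}"

definition unit_tangent :: "(real \<Rightarrow> real^4) \<Rightarrow> real \<Rightarrow> real^4" where
  "unit_tangent \<gamma> s = vector_derivative \<gamma> (at s)"

definition arclength_curve :: "real set \<Rightarrow> (real \<Rightarrow> real^4) \<Rightarrow> bool" where
  "arclength_curve I \<gamma> \<longleftrightarrow> smooth_on I \<gamma> \<and>
     (\<forall>s\<in>I. \<gamma> differentiable (at s) \<and> norm (unit_tangent \<gamma> s) = 1)"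

definition two_regular :: "real set \<Rightarrow> (real \<Rightarrow> real^4) \<Rightarrow> bool" where
  "two_regular I \<gamma> \<longleftrightarrow> arclength_curve I \<gamma> \<and>
     (\<forall>s\<in>I. vector_derivative (unit_tangent \<gamma>) (at s) \<noteq> 0)"

text \<open>A frame on gamma: smooth map Z : I \<rightarrow> O(4) whose rows (T, Z1, Z2, Z3) are orthonormal,
  with first row T.\<close>
definition is_frame :: "real set \<Rightarrow> (real \<Rightarrow> real^4) \<Rightarrow> (real \<Rightarrow> real^4^4) \<Rightarrow> bool" where
  "is_frame I \<gamma> Z \<longleftrightarrow> smooth_on I Z \<and>
     (\<forall>s\<in>I. orthogonal_matrix (Z s) \<and> Z s $ 1 = unit_tangent \<gamma> s)"

definition coeff_matrix :: "real set \<Rightarrow> (real \<Rightarrow> real^4^4) \<Rightarrow> (real \<Rightarrow> real^4^4) \<Rightarrow> bool" where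
  "coeff_matrix I Z X \<longleftrightarrow> (\<forall>s\<in>I. (Z has_vector_derivative (X s ** Z s)) (at s))"

definition XF :: "real \<Rightarrow> real \<Rightarrow> real \<Rightarrow> real^4^4" where
  "XF a b c = vector [vector [0, a, 0, 0], vector [-a, 0, b, 0],
                      vector [0, -b, 0, c], vector [0, 0, -c, 0]]"

definition XD :: "real \<Rightarrow> real \<Rightarrow> real \<Rightarrow> real^4^4" where
  "XD a b c = vector [vector [0, a, 0, 0], vector [-a, 0, b, c],
                      vector [0, -b, 0, 0], vector [0, -c, 0, 0]]"

end

theory Submission
  imports Defs
begin

fun Ck :: "nat \<Rightarrow> real set \<Rightarrow> (real \<Rightarrow> 'a::real_normed_vector) \<Rightarrow> bool" where
  "Ck 0 I g = True"
| "Ck (Suc k) I g = (\<exists>g'. (\<forall>s\<in>I. (g has_vector_derivative g' s) (at s)) \<and> Ck k I g')"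

lemma Ck_mono: "Ck (Suc k) I g \<Longrightarrow> Ck k I g"
proof (induction k arbitrary: g)
  case 0 then show ?case by simp
next
  case (Suc k)
  then obtain g' where "\<forall>s\<in>I. (g has_vector_derivative g' s) (at s)" "Ck (Suc k) I g'" by auto
  then show ?case using Suc.IH by auto
qed

lemma Ck_cong:
  assumes "open I" "\<forall>s\<in>I. g s = h s" "Ck k I g" shows "Ck k I h"
proof (cases k)
  case 0 then show ?thesis by simp
next
  case (Suc m)
  then obtain g' where g': "\<forall>s\<in>I. (g has_vector_derivative g' s) (at s)" "Ck m I g'" using assms by auto
  have "\<forall>s\<in>I. (h has_vector_derivative g' s) (at s)"
    using g'(1) assms(1,2) by (metis has_vector_derivative_transform_within_open)
  then show ?thesis using Suc g'(2) by auto
qed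

lemma smooth_Ck_aux:
  assumes "\<forall>n. \<forall>s\<in>I. (D n has_vector_derivative D (Suc n) s) (at s)"
  shows "Ck k I (D m)"
  using assms by (induction k arbitrary: m) auto

lemma smooth_Ck: assumes "open I" "smooth_on I g" shows "Ck k I g"
proof -
  obtain D where D: "\<forall>s\<in>I. D 0 s = g s" "\<forall>n. \<forall>s\<in>I. (D n has_vector_derivative D (Suc n) s) (at s)"
    using assms(2) unfolding smooth_on_def by blast
  show ?thesis using Ck_cong[OF assms(1) D(1) smooth_Ck_aux[OF D(2)]] .
qed

lemma Ck_smooth: assumes "open I" "\<forall>k. Ck k I g" shows "smooth_on I g"
proof -
  define D where "D n = ((\<lambda>f s. vector_derivative f (at s)) ^^ n) g" for n
  have DS: "D (Suc n) = (\<lambda>s. vector_derivative (D n) (at s))" for n by (simp add: D_def)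
  have all: "\<forall>k. Ck k I (D n)" for n
  proof (induction n)
    case 0 then show ?case using assms by (simp add: D_def)
  next
    case (Suc n)
    show ?case
    proof
      fix k
      have "Ck (Suc k) I (D n)" using Suc by blast
      then obtain g' where g': "\<forall>s\<in>I. (D n has_vector_derivative g' s) (at s)" "Ck k I g'"
        by auto
      have "\<forall>s\<in>I. g' s = D (Suc n) s" using g'(1) by (metis DS vector_derivative_at)
      then show "Ck k I (D (Suc n))" using Ck_cong[OF assms(1) _ g'(2)] by blast
    qed
  qed
  have X: "\<forall>n. \<forall>s\<in>I. (D n has_vector_derivative D (Suc n) s) (at s)"
  proof (intro allI ballI)
    fix n s assume s: "s \<in> I"
    have "Ck (Suc 0) I (D n)" using all by blast
    then obtain g' where g': "\<forall>s\<in>I. (D n has_vector_derivative g' s) (at s)"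
      by auto
    then show "(D n has_vector_derivative D (Suc n) s) (at s)"
      using s by (metis DS vector_derivative_at)
  qed
  have "\<forall>s\<in>I. D 0 s = g s" by (simp add: D_def)
  then show ?thesis unfolding smooth_on_def using X by blast
qed

lemma Ck_add: "Ck k I f \<Longrightarrow> Ck k I g \<Longrightarrow> Ck k I (\<lambda>s. f s + g s)"
proof (induction k arbitrary: f g)
  case 0 then show ?case by simp
next
  case (Suc k)
  obtain f' where f': "\<forall>s\<in>I. (f has_vector_derivative f' s) (at s)" "Ck k I f'" using Suc.prems by auto
  obtain g' where g': "\<forall>s\<in>I. (g has_vector_derivative g' s) (at s)" "Ck k I g'" using Suc.prems by auto
  have "\<forall>s\<in>I. ((\<lambda>s. f s + g s) has_vector_derivative (f' s + g' s)) (at s)"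
    using f' g' by (auto intro: has_vector_derivative_add)
  then show ?case using Suc.IH[OF f'(2) g'(2)] by auto
qed

lemma Ck_const: "Ck k I (\<lambda>s. c)"
  by (induction k arbitrary: c) (auto intro!: exI[of _ "\<lambda>s. 0"])

lemma Ck_linear: assumes "bounded_linear L" shows "Ck k I f \<Longrightarrow> Ck k I (\<lambda>s. L (f s))"
proof (induction k arbitrary: f)
  case 0 then show ?case by simp
next
  case (Suc k)
  obtain f' where f': "\<forall>s\<in>I. (f has_vector_derivative f' s) (at s)" "Ck k I f'" using Suc.prems by auto
  have "\<forall>s\<in>I. ((\<lambda>s. L (f s)) has_vector_derivative L (f' s)) (at s)"
    using f' bounded_linear.has_vector_derivative[OF assms] by blast
  then show ?case using Suc.IH[OF f'(2)] by auto
qed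

lemma Ck_bilinear: assumes "bounded_bilinear pr"
  shows "Ck k I f \<Longrightarrow> Ck k I g \<Longrightarrow> Ck k I (\<lambda>s. pr (f s) (g s))"
proof (induction k arbitrary: f g)
  case 0 then show ?case by simp
next
  case (Suc k)
  obtain f' where f': "\<forall>s\<in>I. (f has_vector_derivative f' s) (at s)" "Ck k I f'" using Suc.prems by auto
  obtain g' where g': "\<forall>s\<in>I. (g has_vector_derivative g' s) (at s)" "Ck k I g'" using Suc.prems by auto
  have "\<forall>s\<in>I. ((\<lambda>s. pr (f s) (g s)) has_vector_derivative (pr (f s) (g' s) + pr (f' s) (g s))) (at s)"
    using f' g' bounded_bilinear.has_vector_derivative[OF assms] by blast
  moreover have "Ck k I (\<lambda>s. pr (f s) (g' s) + pr (f' s) (g s))"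
  proof (rule Ck_add)
    show "Ck k I (\<lambda>s. pr (f s) (g' s))" using Suc.IH[OF Ck_mono g'(2)] Suc.prems(1) by simp
    show "Ck k I (\<lambda>s. pr (f' s) (g s))" using Suc.IH[OF f'(2) Ck_mono] Suc.prems(2) by simp
  qed
  ultimately show ?case by auto
qed

lemma bilinear_mm: "bounded_bilinear (\<lambda>(A::real^'n^'m) (B::real^'p^'n). A ** B)"
  unfolding bilinear_conv_bounded_bilinear[symmetric] bilinear_def
proof (intro conjI allI)
  fix A :: "real^'n^'m" show "linear (\<lambda>B::real^'p^'n. A ** B)"
    by (rule linearI) (simp_all add: matrix_add_ldistrib matrix_scalar_ac scalar_matrix_assoc)
next
  fix B :: "real^'p^'n" show "linear (\<lambda>A::real^'n^'m. A ** B)"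
  proof (rule linearI)
    fix x y :: "real^'n^'m"
    show "(x + y) ** B = x ** B + y ** B"
      by (simp add: matrix_matrix_mult_def vec_eq_iff sum.distrib distrib_right)
  next
    fix c :: real and x :: "real^'n^'m"
    show "(c *\<^sub>R x) ** B = c *\<^sub>R (x ** B)" by (simp add: scalar_matrix_assoc)
  qed
qed

lemma linear_transpose: "linear (transpose :: real^'n^'m \<Rightarrow> real^'m^'n)"
  by (rule linearI) (simp_all add: transpose_def vec_eq_iff)

lemma bilinear_mmt: "bounded_bilinear (\<lambda>(A::real^'n^'m) (B::real^'n^'p). A ** transpose B)"
  unfolding bilinear_conv_bounded_bilinear[symmetric] bilinear_def
proof (intro conjI allI)
  fix A :: "real^'n^'m" show "linear (\<lambda>B::real^'n^'p. A ** transpose B)"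
    using linear_compose[OF linear_transpose, of "\<lambda>B. A ** B"] bilinear_mm
    unfolding bilinear_conv_bounded_bilinear[symmetric] bilinear_def o_def by blast
next
  fix B :: "real^'n^'p" show "linear (\<lambda>A::real^'n^'m. A ** transpose B)"
    using bilinear_mm unfolding bilinear_conv_bounded_bilinear[symmetric] bilinear_def by blast
qed


lemma vector_4 [simp]:
 "(vector [x,y,z,w] ::('a::zero)^4)$1 = x"
 "(vector [x,y,z,w] ::('a::zero)^4)$2 = y"
 "(vector [x,y,z,w] ::('a::zero)^4)$3 = z"
 "(vector [x,y,z,w] ::('a::zero)^4)$4 = w"
  unfolding vector_def by simp_all

definition E0 :: "real^4^4" where
  "E0 = vector [vector [1,0,0,0], vector [0,1,0,0], vector [0,0,0,0], vector [0,0,0,0]]"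
definition E1 :: "real^4^4" where
  "E1 = vector [vector [0,0,0,0], vector [0,0,0,0], vector [0,0,1,0], vector [0,0,0,-1]]"
definition E2 :: "real^4^4" where
  "E2 = vector [vector [0,0,0,0], vector [0,0,0,0], vector [0,0,0,-1], vector [0,0,-1,0]]"
definition Rm :: "real \<Rightarrow> real \<Rightarrow> real^4^4" where
  "Rm c s = E0 + c *\<^sub>R E1 + s *\<^sub>R E2"

lemma mat_ext4: "(A::real^4^4) = B \<longleftrightarrow> (\<forall>i j. A$i$j = B$i$j)"
  by (simp add: vec_eq_iff)

lemma Rm_orth: assumes "c^2 + s^2 = 1" shows "orthogonal_matrix (Rm c s)"
  unfolding orthogonal_matrix
  using assms
  by (simp add: mat_ext4 forall_4 matrix_matrix_mult_def transpose_def sum_4 mat_def Rm_def E0_def E1_def E2_def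
      power2_eq_square algebra_simps)

lemma Rm_row1: "(Rm c s ** F) $ 1 = F $ 1"
  by (simp add: vec_eq_iff forall_4 matrix_matrix_mult_def sum_4 Rm_def E0_def E1_def E2_def)

lemma Rm_key: assumes "c^2 + s^2 = 1"
  shows "Rm c s ** XF a b t + ((- s * t) *\<^sub>R E1 + (c * t) *\<^sub>R E2) = XD (1*a) (1*b*c) (- 1 * b * s) ** Rm c s"
  using assms
  apply (simp add: mat_ext4 forall_4 matrix_matrix_mult_def sum_4 Rm_def E0_def E1_def E2_def XF_def XD_def
      power2_eq_square algebra_simps)
  by (metis distrib_left mult_1_right)


lemma matrix_add_rdistrib': "((A::real^'n^'m) + B) ** C = A ** C + B ** C"
  by (simp add: matrix_matrix_mult_def vec_eq_iff sum.distrib distrib_right)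

theorem proposition3:
  fixes I :: "real set" and f1 f2 f3 :: "real \<Rightarrow> real"
    and \<gamma> :: "real \<Rightarrow> real^4" and F :: "real \<Rightarrow> real^4^4" and \<theta> :: "real \<Rightarrow> real"
  assumes "open_interval I"
    and "two_regular I \<gamma>"
    and "is_frame I \<gamma> F"
    and "coeff_matrix I F (\<lambda>s. XF (f1 s) (f2 s) (f3 s))"
    and "\<forall>s\<in>I. (\<theta> has_real_derivative f3 s) (at s)"
  shows "\<exists>\<epsilon> \<kappa> :: real. \<epsilon> \<in> {1, -1} \<and> \<kappa> \<in> {1, -1} \<and>
           (\<exists>D. is_frame I \<gamma> D \<and>
                coeff_matrix I D (\<lambda>s. XD (\<epsilon> * f1 s) (\<epsilon> * f2 s * cos (\<theta> s))
                                         (- \<kappa> * f2 s * sin (\<theta> s))))"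
proof -
  have opI: "open I" using assms(1) by (simp add: open_interval_def)
  have Fsm: "smooth_on I F" and Forth: "\<forall>s\<in>I. orthogonal_matrix (F s)"
    and F1: "\<forall>s\<in>I. F s $ 1 = unit_tangent \<gamma> s"
    using assms(3) by (auto simp: is_frame_def)
  define X where "X s = XF (f1 s) (f2 s) (f3 s)" for s
  have Fder: "\<forall>s\<in>I. (F has_vector_derivative (X s ** F s)) (at s)"
    using assms(4) by (simp add: coeff_matrix_def X_def)
  have FC: "Ck k I F" for k using smooth_Ck[OF opI Fsm] .
  have f3C: "Ck k I f3" for k
  proof -
    obtain g' where g': "\<forall>s\<in>I. (F has_vector_derivative g' s) (at s)" "Ck k I g'"
      using FC[of "Suc k"] by auto
    have "Ck k I (\<lambda>s. (\<lambda>A B. A ** transpose B) (g' s) (F s))"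
      by (rule Ck_bilinear[OF bilinear_mmt g'(2) FC])
    then have "Ck k I (\<lambda>s. (g' s ** transpose (F s)) $ 3 $ 4)"
      using Ck_linear[OF bounded_linear_compose[OF bounded_linear_vec_nth[of "4::4"] bounded_linear_vec_nth[of "3::4"]],
        of k I "\<lambda>s. g' s ** transpose (F s)"]
      by simp
    moreover have "\<forall>s\<in>I. (g' s ** transpose (F s)) $ 3 $ 4 = f3 s"
    proof
      fix s assume s: "s \<in> I"
      have "g' s = X s ** F s" using g'(1) Fder s by (metis vector_derivative_at)
      then have "g' s ** transpose (F s) = X s"
        using Forth s by (simp add: matrix_mul_assoc[symmetric] orthogonal_matrix_def)
      then show "(g' s ** transpose (F s)) $ 3 $ 4 = f3 s" by (simp add: X_def XF_def)
    qed
    ultimately show ?thesis by (rule Ck_cong[OF opI, rotated])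
  qed
  have negl: "bounded_linear (\<lambda>x::real. -x)"
    using bounded_linear_minus[OF bounded_linear_ident] by simp
  have cder: "\<forall>s\<in>I. ((\<lambda>s. cos (\<theta> s)) has_vector_derivative (- (sin (\<theta> s) * f3 s))) (at s)"
  proof
    fix s assume s: "s \<in> I"
    have "((\<lambda>s. cos (\<theta> s)) has_real_derivative - sin (\<theta> s) * f3 s) (at s)"
      using DERIV_fun_cos assms(5) s by blast
    then show "((\<lambda>s. cos (\<theta> s)) has_vector_derivative (- (sin (\<theta> s) * f3 s))) (at s)"
      by (simp add: has_real_derivative_iff_has_vector_derivative)
  qed
  have sder: "\<forall>s\<in>I. ((\<lambda>s. sin (\<theta> s)) has_vector_derivative (cos (\<theta> s) * f3 s)) (at s)"
  proof
    fix s assume s: "s \<in> I"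
    have "((\<lambda>s. sin (\<theta> s)) has_real_derivative cos (\<theta> s) * f3 s) (at s)"
      using DERIV_fun_sin assms(5) s by blast
    then show "((\<lambda>s. sin (\<theta> s)) has_vector_derivative (cos (\<theta> s) * f3 s)) (at s)"
      by (simp add: has_real_derivative_iff_has_vector_derivative)
  qed
  have csC: "Ck k I (\<lambda>s. cos (\<theta> s)) \<and> Ck k I (\<lambda>s. sin (\<theta> s))" for k
  proof (induction k)
    case 0 then show ?case by simp
  next
    case (Suc k)
    have a: "Ck k I (\<lambda>s. sin (\<theta> s) * f3 s)"
      using Ck_bilinear[OF bounded_bilinear_mult, of k I "\<lambda>s. sin (\<theta> s)" f3] Suc f3C by simp
    have b: "Ck k I (\<lambda>s. cos (\<theta> s) * f3 s)"
      using Ck_bilinear[OF bounded_bilinear_mult, of k I "\<lambda>s. cos (\<theta> s)" f3] Suc f3C by simp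
    have c: "Ck k I (\<lambda>s. - (sin (\<theta> s) * f3 s))"
      using Ck_linear[OF negl a] by simp
    have C1: "Ck (Suc k) I (\<lambda>s. cos (\<theta> s))"
      unfolding Ck.simps by (rule exI[where x="\<lambda>s. - (sin (\<theta> s) * f3 s)"]) (rule conjI[OF cder c])
    have C2: "Ck (Suc k) I (\<lambda>s. sin (\<theta> s))"
      unfolding Ck.simps by (rule exI[where x="\<lambda>s. cos (\<theta> s) * f3 s"]) (rule conjI[OF sder b])
    show ?case using C1 C2 by (rule conjI)
  qed
  define R where "R s = Rm (cos (\<theta> s)) (sin (\<theta> s))" for s
  define D where "D s = R s ** F s" for s
  have RC: "Ck k I R" for k
  proof -
    have a: "Ck k I (\<lambda>s. cos (\<theta> s) *\<^sub>R E1)"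
      using Ck_bilinear[OF bounded_bilinear_scaleR csC[of k, THEN conjunct1] Ck_const[of k I E1]] by simp
    have b: "Ck k I (\<lambda>s. sin (\<theta> s) *\<^sub>R E2)"
      using Ck_bilinear[OF bounded_bilinear_scaleR csC[of k, THEN conjunct2] Ck_const[of k I E2]] by simp
    have "Ck k I (\<lambda>s. E0 + cos (\<theta> s) *\<^sub>R E1 + sin (\<theta> s) *\<^sub>R E2)"
      by (rule Ck_add[OF Ck_add[OF Ck_const a] b])
    then show ?thesis by (simp add: R_def[abs_def] Rm_def)
  qed
  have DC: "Ck k I D" for k
    unfolding D_def using Ck_bilinear[OF bilinear_mm RC FC] by simp
  have Dsm: "smooth_on I D" using DC by (intro Ck_smooth[OF opI] allI)
  have Rder: "(R has_vector_derivative ((- sin (\<theta> s) * f3 s) *\<^sub>R E1 + (cos (\<theta> s) * f3 s) *\<^sub>R E2)) (at s)"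
    if s: "s \<in> I" for s
  proof -
    have c1: "((\<lambda>s. cos (\<theta> s)) has_field_derivative (- (sin (\<theta> s) * f3 s))) (at s)"
      using cder s by (simp add: has_real_derivative_iff_has_vector_derivative)
    have s1: "((\<lambda>s. sin (\<theta> s)) has_field_derivative (cos (\<theta> s) * f3 s)) (at s)"
      using sder s by (simp add: has_real_derivative_iff_has_vector_derivative)
    have "((\<lambda>s. E0 + cos (\<theta> s) *\<^sub>R E1 + sin (\<theta> s) *\<^sub>R E2) has_vector_derivative
        (0 + (cos (\<theta> s) *\<^sub>R 0 + (- (sin (\<theta> s) * f3 s)) *\<^sub>R E1) + (sin (\<theta> s) *\<^sub>R 0 + (cos (\<theta> s) * f3 s) *\<^sub>R E2))) (at s)"
      by (intro has_vector_derivative_add has_vector_derivative_const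
          has_vector_derivative_scaleR c1 s1)
    then show ?thesis by (simp add: R_def[abs_def] Rm_def)
  qed
  have isf: "is_frame I \<gamma> D"
    unfolding is_frame_def
  proof (intro conjI Dsm ballI)
    fix s assume s: "s \<in> I"
    show "orthogonal_matrix (D s)" unfolding D_def R_def
      by (rule orthogonal_matrix_mul[OF Rm_orth[OF sin_cos_squared_add2] Forth[rule_format, OF s]])
    show "D s $ 1 = unit_tangent \<gamma> s" using F1 s by (simp add: D_def R_def Rm_row1)
  qed
  have cm: "coeff_matrix I D (\<lambda>s. XD (1 * f1 s) (1 * f2 s * cos (\<theta> s)) (- 1 * f2 s * sin (\<theta> s)))"
    unfolding coeff_matrix_def
  proof
    fix s assume s: "s \<in> I"
    have "(D has_vector_derivative (R s ** (X s ** F s) + ((- sin (\<theta> s) * f3 s) *\<^sub>R E1 + (cos (\<theta> s) * f3 s) *\<^sub>R E2) ** F s)) (at s)"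
      unfolding D_def[abs_def]
      using bounded_bilinear.has_vector_derivative[OF bilinear_mm Rder[OF s] Fder[rule_format, OF s]]
      by simp
    moreover have "R s ** (X s ** F s) + ((- sin (\<theta> s) * f3 s) *\<^sub>R E1 + (cos (\<theta> s) * f3 s) *\<^sub>R E2) ** F s
       = XD (1 * f1 s) (1 * f2 s * cos (\<theta> s)) (- 1 * f2 s * sin (\<theta> s)) ** D s"
      unfolding D_def R_def X_def matrix_mul_assoc
      unfolding matrix_add_rdistrib'[symmetric]
      using Rm_key[OF sin_cos_squared_add2, of "\<theta> s" "f1 s" "f2 s" "f3 s"]
      by (simp only: mult_minus_left)
    ultimately show "(D has_vector_derivative (XD (1 * f1 s) (1 * f2 s * cos (\<theta> s)) (- 1 * f2 s * sin (\<theta> s)) ** D s)) (at s)"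
      by simp
  qed
  show ?thesis
    apply (rule exI[of _ 1], rule exI[of _ 1])
    using isf cm by auto
qed

end
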